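(* Let $\Gamma$ be a finite simplicial graph satisfying (B1): for all non-adjacent $u,v\in V(\Gamma)$, $u\sim v$. Let $v,w\in V(\Gamma)$ be distinct, non-adjacent vertices, and let $c_1=c_{w,v}$ (the partial conjugation of the single vertex $v$ by $w$). Then there exist $t,c_2\in\mathrm{Aut}(A_\Gamma)$ such that $c_1^m=[t^m,c_2^{-1}]$ for all $m\ge 0$. In particular, $c_1^m\in\mathrm{S}\mathcal{I}A'_\Gamma(m)$ for all $m\ge 0$.
   Context: $n=|V(\Gamma)|$. For $v\in V(\Gamma)$, $\mathrm{lk}(v)$ is the set of vertices adjacent to $v$ and $\mathrm{st}(v)=\mathrm{lk}(v)\cup\{v\}$; $v\le w$ iff $\mathrm{lk}(v)\subset\mathrm{st}(w)$; $v\sim w$ iff $v\le w$ and $w\le v$. $A_\Gamma=\langle V(\Gamma)\mid [u,v]=1 \text{ whenever } u,v \text{ adjacent}\rangle$. Under (B1), $\Gamma-\mathrm{st}(w)$ is totally disconnected, and $c_{w,v}$ denotes the automorphism $v\mapsto w^{-1}vw$ fixing all other vertices. Commutator convention: $[a,b]=a^{-1}b^{-1}ab$. Transvection: for distinct $v,w$ with $v\le w$, $t_{vw}$ maps $v\mapsto vw$, fixing other vertices; partial conjugation $c_{v,Y}$ ($Y$ a component of $\Gamma-\mathrm{st}(v)$) maps $x\mapsto v^{-1}xv$ for $x\in Y$, fixing others. $\mathrm{SAut}^0(A_\Gamma)$ is generated by transvections and partial conjugations; $\mathrm{S}\mathcal{I}A_\Gamma(m)$ is the kernel of $\mathrm{SAut}^0(A_\Gamma)\to\mathrm{SL}(n,\mathbb{Z})\to\mathrm{SL}(n,\mathbb{Z}/m\mathbb{Z})$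 (action on $H_1(A_\Gamma;\mathbb Z)=\mathbb Z^n$, then reduction mod $m$), and $\mathrm{S}\mathcal{I}A'_\Gamma(m)$ is its commutator subgroup. *)

theory Defs
  imports "HOL-Algebra.Algebra"
begin

definition simplicial_graph :: "'v set \<Rightarrow> ('v \<Rightarrow> 'v \<Rightarrow> bool) \<Rightarrow> bool" where
  "simplicial_graph V E \<longleftrightarrow> finite V \<and> (\<forall>u v. E u v \<longrightarrow> u \<in> V \<and> v \<in> V)
     \<and> (\<forall>u v. E u v \<longrightarrow> E v u) \<and> (\<forall>u. \<not> E u u)"

definition lk :: "'v set \<Rightarrow> ('v \<Rightarrow> 'v \<Rightarrow> bool) \<Rightarrow> 'v \<Rightarrow> 'v set" where
  "lk V E v = {u \<in> V. E v u}"

definition st :: "'v set \<Rightarrow> ('v \<Rightarrow> 'v \<Rightarrow> bool) \<Rightarrow> 'v \<Rightarrow> 'v set" where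
  "st V E v = insert v (lk V E v)"

definition vle :: "'v set \<Rightarrow> ('v \<Rightarrow> 'v \<Rightarrow> bool) \<Rightarrow> 'v \<Rightarrow> 'v \<Rightarrow> bool" where
  "vle V E v w \<longleftrightarrow> lk V E v \<subseteq> st V E w"

definition vequiv :: "'v set \<Rightarrow> ('v \<Rightarrow> 'v \<Rightarrow> bool) \<Rightarrow> 'v \<Rightarrow> 'v \<Rightarrow> bool" where
  "vequiv V E v w \<longleftrightarrow> vle V E v w \<and> vle V E w v"

definition B1 :: "'v set \<Rightarrow> ('v \<Rightarrow> 'v \<Rightarrow> bool) \<Rightarrow> bool" where
  "B1 V E \<longleftrightarrow> (\<forall>u\<in>V. \<forall>v\<in>V. \<not> E u v \<longrightarrow> vequiv V E u v)"

definition components :: "'v set \<Rightarrow> ('v \<Rightarrow> 'v \<Rightarrow> bool) \<Rightarrow> 'v set set" where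
  "components S E = {{y \<in> S. (\<lambda>a b. a \<in> S \<and> b \<in> S \<and> E a b)\<^sup>*\<^sup>* x y} | x. x \<in> S}"

text \<open>Words: lists of letters (vertex, sign); True = generator, False = its inverse.\<close>
type_synonym 'v word = "('v \<times> bool) list"

inductive raag_step :: "('v \<Rightarrow> 'v \<Rightarrow> bool) \<Rightarrow> 'v word \<Rightarrow> 'v word \<Rightarrow> bool"
  for E where
  cancel: "raag_step E (xs @ [(a, b), (a, \<not> b)] @ ys) (xs @ ys)"
| commute: "E a c \<Longrightarrow> raag_step E (xs @ [(a, b), (c, d)] @ ys) (xs @ [(c, d), (a, b)] @ ys)"

definition raag_rel :: "'v set \<Rightarrow> ('v \<Rightarrow> 'v \<Rightarrow> bool) \<Rightarrow> ('v word \<times> 'v word) set" where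
  "raag_rel V E = {(x, y). x \<in> lists (V \<times> UNIV) \<and> y \<in> lists (V \<times> UNIV)
                        \<and> equivclp (raag_step E) x y}"

definition raag_mult :: "'v set \<Rightarrow> ('v \<Rightarrow> 'v \<Rightarrow> bool) \<Rightarrow> 'v word set \<Rightarrow> 'v word set \<Rightarrow> 'v word set" where
  "raag_mult V E A B = raag_rel V E `` {(SOME x. x \<in> A) @ (SOME y. y \<in> B)}"

definition raag :: "'v set \<Rightarrow> ('v \<Rightarrow> 'v \<Rightarrow> bool) \<Rightarrow> 'v word set monoid" where
  "raag V E = \<lparr> carrier = lists (V \<times> UNIV) // raag_rel V E,
      monoid.mult = raag_mult V E,
      monoid.one = raag_rel V E `` {[]} \<rparr>"

definition word_inv :: "'v word \<Rightarrow> 'v word" where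
  "word_inv w = rev (map (\<lambda>(a, b). (a, \<not> b)) w)"

definition subst_word :: "('v \<Rightarrow> 'v word) \<Rightarrow> 'v word \<Rightarrow> 'v word" where
  "subst_word f w = concat (map (\<lambda>(a, b). if b then f a else word_inv (f a)) w)"

definition induced :: "'v set \<Rightarrow> ('v \<Rightarrow> 'v \<Rightarrow> bool) \<Rightarrow> ('v \<Rightarrow> 'v word) \<Rightarrow> ('v word set \<Rightarrow> 'v word set)" where
  "induced V E f = (\<lambda>A \<in> carrier (raag V E). raag_rel V E `` {subst_word f (SOME x. x \<in> A)})"

definition transvection :: "'v set \<Rightarrow> ('v \<Rightarrow> 'v \<Rightarrow> bool) \<Rightarrow> 'v \<Rightarrow> 'v \<Rightarrow> ('v word set \<Rightarrow> 'v word set)" where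
  "transvection V E v w = induced V E (\<lambda>x. if x = v then [(v, True), (w, True)] else [(x, True)])"

definition partial_conj :: "'v set \<Rightarrow> ('v \<Rightarrow> 'v \<Rightarrow> bool) \<Rightarrow> 'v \<Rightarrow> 'v set \<Rightarrow> ('v word set \<Rightarrow> 'v word set)" where
  "partial_conj V E v Y = induced V E
     (\<lambda>x. if x \<in> Y then [(v, False), (x, True), (v, True)] else [(x, True)])"

definition SAut0 :: "'v set \<Rightarrow> ('v \<Rightarrow> 'v \<Rightarrow> bool) \<Rightarrow> ('v word set \<Rightarrow> 'v word set) set" where
  "SAut0 V E = generate (AutoGroup (raag V E))
     ({transvection V E v w | v w. v \<in> V \<and> w \<in> V \<and> v \<noteq> w \<and> vle V E v w}
      \<union> {partial_conj V E v Y | v Y. v \<in> V \<and> Y \<in> components (V - st V E v) E})"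

definition exp_sum :: "'v \<Rightarrow> 'v word \<Rightarrow> int" where
  "exp_sum x w = int (length (filter (\<lambda>l. l = (x, True)) w))
               - int (length (filter (\<lambda>l. l = (x, False)) w))"

text \<open>Matrix entry (x,u) of the action of phi on H_1(A_Gamma;Z) = Z^V:
the x-coordinate of the image of the generator u.\<close>
definition hom_matrix :: "'v set \<Rightarrow> ('v \<Rightarrow> 'v \<Rightarrow> bool) \<Rightarrow> ('v word set \<Rightarrow> 'v word set) \<Rightarrow> 'v \<Rightarrow> 'v \<Rightarrow> int" where
  "hom_matrix V E \<phi> x u = exp_sum x (SOME w. w \<in> \<phi> (raag_rel V E `` {[(u, True)]}))"

text \<open>SIA_Gamma(m): kernel of SAut^0 -> SL(n,Z) -> SL(n,Z/mZ).
For m = 0 the reduction is the identity of Z.\<close>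
definition SIA :: "'v set \<Rightarrow> ('v \<Rightarrow> 'v \<Rightarrow> bool) \<Rightarrow> nat \<Rightarrow> ('v word set \<Rightarrow> 'v word set) set" where
  "SIA V E m = {\<phi> \<in> SAut0 V E. \<forall>x\<in>V. \<forall>u\<in>V.
       hom_matrix V E \<phi> x u mod int m = (if x = u then 1 else 0) mod int m}"

definition SIA' :: "'v set \<Rightarrow> ('v \<Rightarrow> 'v \<Rightarrow> bool) \<Rightarrow> nat \<Rightarrow> ('v word set \<Rightarrow> 'v word set) set" where
  "SIA' V E m = derived (AutoGroup (raag V E)) (SIA V E m)"

definition cwv :: "'v set \<Rightarrow> ('v \<Rightarrow> 'v \<Rightarrow> bool) \<Rightarrow> 'v \<Rightarrow> 'v \<Rightarrow> ('v word set \<Rightarrow> 'v word set)" where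
  "cwv V E w v = partial_conj V E w {v}"

end

theory Submission
  imports Defs
begin


abbreviation QQ :: "('v \<Rightarrow> 'v \<Rightarrow> bool) \<Rightarrow> 'v word \<Rightarrow> 'v word \<Rightarrow> bool" where
  "QQ E \<equiv> equivclp (raag_step E)"

lemma step_cong: "raag_step E x y \<Longrightarrow> raag_step E (a@x@b) (a@y@b)"
proof (induction rule: raag_step.induct)
  case (cancel xs a' b' ys)
  show ?case using raag_step.cancel[where xs="a@xs" and ys="ys@b" and E=E] by simp
next
  case (commute a' c xs b' d ys)
  show ?case using raag_step.commute[where E=E and a=a' and c=c and xs="a@xs" and ys="ys@b", OF commute] by simp
qed

lemma QQ_cong: "QQ E x y \<Longrightarrow> QQ E (a@x@b) (a@y@b)"
proof (induction rule: equivclp_induct)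
  case base then show ?case by simp
next
  case (step y z)
  then show ?case using step_cong equivclp_into_equivclp by metis
qed

lemma QQ_trans: "QQ E x y \<Longrightarrow> QQ E y z \<Longrightarrow> QQ E x z"
  by (rule equivclp_trans)

lemma QQ_sym: "QQ E x y \<Longrightarrow> QQ E y x"
  by (rule equivclp_sym)

lemma QQ_app: assumes "QQ E x y" "QQ E x' y'" shows "QQ E (x@x') (y@y')"
proof -
  have 1: "QQ E (x@x') (y@x')" using QQ_cong[OF assms(1), of "[]" x'] by simp
  have 2: "QQ E (y@x') (y@y')" using QQ_cong[OF assms(2), of y "[]"] by simp
  show ?thesis using QQ_trans[OF 1 2] .
qed

lemma word_inv_append [simp]: "word_inv (x@y) = word_inv y @ word_inv x"
  by (simp add: word_inv_def)

lemma word_inv_inv [simp]: "word_inv (word_inv x) = x"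
  by (induction x) (auto simp: word_inv_def)

lemma word_inv_Nil [simp]: "word_inv [] = []"
  by (simp add: word_inv_def)

lemma word_inv_Cons [simp]: "word_inv ((a,b) # x) = word_inv x @ [(a, \<not>b)]"
  by (simp add: word_inv_def)

lemma QQ_cancel: "QQ E ((a,b) # (a, \<not>b) # x) x"
  using raag_step.cancel[where xs="[]" and ys=x and E=E and a=a and b=b] by auto

lemma QQ_rinv: "QQ E (x @ word_inv x) []"
proof (induction x)
  case Nil then show ?case by simp
next
  case (Cons l x)
  obtain a b where l: "l = (a,b)" by fastforce
  have "QQ E ([l] @ (x @ word_inv x) @ [(a,\<not>b)]) ([l] @ [] @ [(a,\<not>b)])"
    by (rule QQ_cong[OF Cons])
  moreover have "QQ E ([l] @ [] @ [(a,\<not>b)]) []"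
    using QQ_cancel[of E a b "[]"] l by simp
  ultimately show ?case using l QQ_trans by simp
qed

lemma QQ_linv: "QQ E (word_inv x @ x) []"
  using QQ_rinv[of E "word_inv x"] by simp

lemma step_inv:
  assumes sym: "\<And>a c. E a c \<Longrightarrow> E c a"
  shows "raag_step E x y \<Longrightarrow> raag_step E (word_inv x) (word_inv y)"
proof (induction rule: raag_step.induct)
  case (cancel xs a b ys)
  show ?case using raag_step.cancel[where xs="word_inv ys" and ys="word_inv xs" and E=E and a=a and b=b]
    by simp
next
  case (commute a c xs b d ys)
  show ?case using raag_step.commute[where E=E and a=c and c=a and xs="word_inv ys" and ys="word_inv xs"
        and b="\<not>d" and d="\<not>b", OF sym[OF commute]]
    by simp
qed

lemma QQ_inv:
  assumes sym: "\<And>a c. E a c \<Longrightarrow> E c a"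
  shows "QQ E x y \<Longrightarrow> QQ E (word_inv x) (word_inv y)"
proof (induction rule: equivclp_induct)
  case base then show ?case by simp
next
  case (step y z)
  from step(2) show ?case
  proof
    assume "raag_step E y z"
    from equivclp_into_equivclp[OF step(3)] step_inv[OF sym this] show ?thesis by blast
  next
    assume "raag_step E z y"
    from equivclp_into_equivclp[OF step(3)] step_inv[OF sym this] show ?thesis by blast
  qed
qed

lemma QQ_comm_inv:
  assumes "QQ E (u@v) (v@u)"
  shows "QQ E (word_inv u @ v) (v @ word_inv u)"
proof -
  have 1: "QQ E (word_inv u @ v @ []) (word_inv u @ v @ (u @ word_inv u))"
    using QQ_cong[OF QQ_sym[OF QQ_rinv[of E u]], of "word_inv u @ v" "[]"] by simp
  have 2: "QQ E (word_inv u @ (v @ u) @ word_inv u) (word_inv u @ (u @ v) @ word_inv u)"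
    by (rule QQ_cong[OF QQ_sym[OF assms]])
  have 3: "QQ E ((word_inv u @ u) @ (v @ word_inv u)) ([] @ (v @ word_inv u))"
    using QQ_cong[OF QQ_linv[of E u], of "[]" "v @ word_inv u"] by simp
  have 4: "QQ E (word_inv u @ v) (word_inv u @ (v @ u) @ word_inv u)" using 1 by simp
  have 5: "QQ E (word_inv u @ (u @ v) @ word_inv u) (v @ word_inv u)" using 3 by simp
  show ?thesis using QQ_trans[OF 4 QQ_trans[OF 2 5]] .
qed

definition sl :: "('v \<Rightarrow> 'v word) \<Rightarrow> 'v \<times> bool \<Rightarrow> 'v word" where
  "sl f = (\<lambda>(a, b). if b then f a else word_inv (f a))"

lemma subst_Nil [simp]: "subst_word f [] = []"
  by (simp add: subst_word_def)
lemma subst_Cons [simp]: "subst_word f (l # x) = sl f l @ subst_word f x"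
  by (simp add: subst_word_def sl_def)
lemma subst_append [simp]: "subst_word f (x @ y) = subst_word f x @ subst_word f y"
  by (simp add: subst_word_def)
lemma sl_simps [simp]: "sl f (a, True) = f a" "sl f (a, False) = word_inv (f a)"
  by (simp_all add: sl_def)
lemma sl_neg: "sl f (a, \<not> b) = word_inv (sl f (a,b))"
  by (simp add: sl_def)

lemma subst_inv: "subst_word f (word_inv x) = word_inv (subst_word f x)"
proof (induction x)
  case Nil then show ?case by simp
next
  case (Cons l x)
  obtain a b where l: "l = (a,b)" by fastforce
  show ?case using Cons l by (simp add: sl_neg)
qed

lemma subst_step:
  assumes sym: "\<And>a c. E a c \<Longrightarrow> E c a"
    and comm: "\<And>a c. E a c \<Longrightarrow> QQ E (f a @ f c) (f c @ f a)"
  shows "raag_step E x y \<Longrightarrow> QQ E (subst_word f x) (subst_word f y)"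
proof (induction rule: raag_step.induct)
  case (cancel xs a b ys)
  have "QQ E (sl f (a,b) @ sl f (a, \<not>b)) []"
    by (cases b) (simp_all add: QQ_rinv QQ_linv)
  from QQ_cong[OF this, where a="subst_word f xs" and b="subst_word f ys"] show ?case by simp
next
  case (commute a c xs b d ys)
  have gen: "QQ E (sl f (a,b) @ sl f (c,d)) (sl f (c,d) @ sl f (a,b))" if "E a c" for a c b d
  proof -
    have c1: "QQ E (f a @ f c) (f c @ f a)" using comm[OF that] .
    have c2: "QQ E (f c @ f a) (f a @ f c)" using comm[OF sym[OF that]] .
    have i1: "QQ E (word_inv (f a) @ f c) (f c @ word_inv (f a))" by (rule QQ_comm_inv[OF c1])
    have i2: "QQ E (word_inv (f c) @ f a) (f a @ word_inv (f c))" by (rule QQ_comm_inv[OF c2])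
    have i3: "QQ E (word_inv (f a) @ word_inv (f c)) (word_inv (f c) @ word_inv (f a))"
      using QQ_inv[OF sym c2] by simp
    show ?thesis
      using c1 i1 i2 i3 QQ_sym[OF i1] QQ_sym[OF i2] QQ_sym[OF i3] QQ_sym[OF c1]
      by (cases b; cases d) simp_all
  qed
  from QQ_cong[OF gen[OF commute], where a="subst_word f xs" and b="subst_word f ys"] show ?case by simp
qed

lemma subst_QQ:
  assumes sym: "\<And>a c. E a c \<Longrightarrow> E c a"
    and comm: "\<And>a c. E a c \<Longrightarrow> QQ E (f a @ f c) (f c @ f a)"
  shows "QQ E x y \<Longrightarrow> QQ E (subst_word f x) (subst_word f y)"
proof (induction rule: equivclp_induct)
  case base then show ?case by simp
next
  case (step y z)
  from step(2) show ?case
  proof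
    assume "raag_step E y z"
    from QQ_trans[OF step(3) subst_step[OF sym comm this]] show ?thesis .
  next
    assume "raag_step E z y"
    from QQ_trans[OF step(3) QQ_sym[OF subst_step[OF sym comm this]]] show ?thesis .
  qed
qed



lemma exp_sum_append [simp]: "exp_sum c (x @ y) = exp_sum c x + exp_sum c y"
  by (simp add: exp_sum_def)
lemma exp_sum_Nil [simp]: "exp_sum c [] = 0"
  by (simp add: exp_sum_def)
lemma exp_sum_Cons: "exp_sum c (l # y) = exp_sum c [l] + exp_sum c y"
  using exp_sum_append[of c "[l]" y] by simp
lemma exp_sum_single [simp]: "exp_sum c [(a,b)] = (if a = c then (if b then 1 else -1) else 0)"
  by (auto simp: exp_sum_def)

lemma exp_sum_step: "raag_step E x y \<Longrightarrow> exp_sum c x = exp_sum c y"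
proof (induction rule: raag_step.induct)
  case (cancel xs a b ys)
  show ?case by (cases b) (auto simp: exp_sum_def)
next
  case (commute a c' xs b d ys)
  show ?case by (auto simp: exp_sum_def)
qed

lemma exp_sum_QQ: "QQ E x y \<Longrightarrow> exp_sum c x = exp_sum c y"
proof (induction rule: equivclp_induct)
  case base then show ?case by simp
next
  case (step y z)
  then show ?case using exp_sum_step by metis
qed

lemma sl_subst: "subst_word g (sl f l) = sl (\<lambda>a. subst_word g (f a)) l"
  by (cases l) (auto simp: sl_def subst_inv)

lemma subst_subst: "subst_word g (subst_word f x) = subst_word (\<lambda>a. subst_word g (f a)) x"
  by (induction x) (simp_all add: sl_subst)

locale rg =
  fixes V :: "'v set" and E :: "'v \<Rightarrow> 'v \<Rightarrow> bool"
  assumes sg: "simplicial_graph V E"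
begin

abbreviation "L \<equiv> lists (V \<times> (UNIV::bool set))"
abbreviation "G \<equiv> raag V E"

definition cls :: "'v word \<Rightarrow> 'v word set" where "cls x = raag_rel V E `` {x}"
definition gen :: "'v \<Rightarrow> 'v word set" where "gen a = cls [(a,True)]"

lemma Esym: "E a c \<Longrightarrow> E c a" using sg by (auto simp: simplicial_graph_def)
lemma EV: "E a c \<Longrightarrow> a \<in> V \<and> c \<in> V" using sg by (auto simp: simplicial_graph_def)
lemma Eirr: "\<not> E a a" using sg by (auto simp: simplicial_graph_def)

lemma equiv_rel: "equiv L (raag_rel V E)"
proof (rule equivI)
  show "refl_on L (raag_rel V E)" unfolding refl_on_def raag_rel_def by auto
  show "sym (raag_rel V E)" unfolding sym_def raag_rel_def by (auto intro: QQ_sym)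
  show "trans (raag_rel V E)" unfolding trans_def raag_rel_def by (blast intro: QQ_trans)
  show "raag_rel V E \<subseteq> L \<times> L" unfolding raag_rel_def by auto
qed

lemma in_cls: "y \<in> cls x \<longleftrightarrow> x \<in> L \<and> y \<in> L \<and> QQ E x y"
  by (auto simp: cls_def raag_rel_def)

lemma self_cls: "x \<in> L \<Longrightarrow> x \<in> cls x" by (simp add: in_cls)

lemma cls_eq: "x \<in> L \<Longrightarrow> y \<in> L \<Longrightarrow> QQ E x y \<Longrightarrow> cls x = cls y"
  unfolding cls_def by (rule equiv_class_eq[OF equiv_rel]) (simp add: raag_rel_def)

lemma carrier_G: "carrier G = cls ` L"
  by (auto simp: raag_def quotient_def cls_def)

lemma cls_carrier: "x \<in> L \<Longrightarrow> cls x \<in> carrier G" by (simp add: carrier_G)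

lemma some_cls: assumes "x \<in> L" shows "(SOME y. y \<in> cls x) \<in> L \<and> QQ E x (SOME y. y \<in> cls x)"
proof -
  have "(SOME y. y \<in> cls x) \<in> cls x" using self_cls[OF assms] by (rule someI)
  from in_cls[THEN iffD1, OF this] show ?thesis by blast
qed

lemma mult_cls: assumes "x \<in> L" "y \<in> L" shows "cls x \<otimes>\<^bsub>G\<^esub> cls y = cls (x @ y)"
proof -
  define x' where "x' = (SOME z. z \<in> cls x)"
  define y' where "y' = (SOME z. z \<in> cls y)"
  have x': "x' \<in> L" "QQ E x x'" using some_cls[OF assms(1)] by (auto simp: x'_def)
  have y': "y' \<in> L" "QQ E y y'" using some_cls[OF assms(2)] by (auto simp: y'_def)
  have "cls x \<otimes>\<^bsub>G\<^esub> cls y = cls (x' @ y')"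
    by (simp add: raag_def raag_mult_def x'_def y'_def cls_def)
  also have "\<dots> = cls (x @ y)"
    using x' y' assms by (intro cls_eq) (auto intro: QQ_sym QQ_app)
  finally show ?thesis .
qed

lemma one_G: "\<one>\<^bsub>G\<^esub> = cls []" by (simp add: raag_def cls_def)

lemma L_inv: "x \<in> L \<Longrightarrow> word_inv x \<in> L" by (auto simp: word_inv_def)

lemma carrierE: assumes "x \<in> carrier G" obtains w where "w \<in> L" "x = cls w"
  using assms unfolding carrier_G by blast

lemma group_G: "group G"
proof (rule groupI)
  fix x y assume "x \<in> carrier G" "y \<in> carrier G"
  then obtain a b where ab: "a \<in> L" "b \<in> L" "x = cls a" "y = cls b" by (metis carrierE)
  have "a @ b \<in> L" using ab by simp
  then show "x \<otimes>\<^bsub>G\<^esub> y \<in> carrier G" using mult_cls[OF ab(1,2)] ab cls_carrier by simp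
next
  show "\<one>\<^bsub>G\<^esub> \<in> carrier G" using one_G cls_carrier[of "[]"] by simp
next
  fix x y z assume "x \<in> carrier G" "y \<in> carrier G" "z \<in> carrier G"
  then obtain a b c where ab: "a \<in> L" "b \<in> L" "c \<in> L" "x = cls a" "y = cls b" "z = cls c"
    by (metis carrierE)
  have "a @ b \<in> L" "b @ c \<in> L" using ab by simp_all
  then show "x \<otimes>\<^bsub>G\<^esub> y \<otimes>\<^bsub>G\<^esub> z = x \<otimes>\<^bsub>G\<^esub> (y \<otimes>\<^bsub>G\<^esub> z)"
    using ab mult_cls by simp
next
  fix x assume "x \<in> carrier G"
  then obtain a where ab: "a \<in> L" "x = cls a" by (metis carrierE)
  then show "\<one>\<^bsub>G\<^esub> \<otimes>\<^bsub>G\<^esub> x = x" using mult_cls[of "[]" a] one_G by simp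
next
  fix x assume "x \<in> carrier G"
  then obtain w where w: "w \<in> L" "x = cls w" by (metis carrierE)
  have wi: "word_inv w \<in> L" using L_inv[OF w(1)] .
  have "cls (word_inv w) \<otimes>\<^bsub>G\<^esub> x = cls (word_inv w @ w)" using mult_cls[OF wi w(1)] w by simp
  also have "\<dots> = cls []" using wi w(1) by (intro cls_eq) (simp_all add: QQ_linv)
  finally have "cls (word_inv w) \<otimes>\<^bsub>G\<^esub> x = \<one>\<^bsub>G\<^esub>" using one_G by simp
  then show "\<exists>y\<in>carrier G. y \<otimes>\<^bsub>G\<^esub> x = \<one>\<^bsub>G\<^esub>" using cls_carrier[OF wi] by blast
qed

lemma inv_cls: assumes "x \<in> L" shows "inv\<^bsub>G\<^esub> (cls x) = cls (word_inv x)"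
proof -
  have wi: "word_inv x \<in> L" using L_inv[OF assms] .
  have "cls (word_inv x) \<otimes>\<^bsub>G\<^esub> cls x = cls (word_inv x @ x)" using mult_cls[OF wi assms] by simp
  also have "\<dots> = cls []" using wi assms by (intro cls_eq) (simp_all add: QQ_linv)
  finally have "cls (word_inv x) \<otimes>\<^bsub>G\<^esub> cls x = \<one>\<^bsub>G\<^esub>" using one_G by simp
  from group.inv_equality[OF group_G this cls_carrier[OF assms] cls_carrier[OF wi]] show ?thesis .
qed

definition good :: "('v \<Rightarrow> 'v word) \<Rightarrow> bool" where
  "good f \<longleftrightarrow> (\<forall>a\<in>V. f a \<in> L) \<and> (\<forall>a c. E a c \<longrightarrow> QQ E (f a @ f c) (f c @ f a))"

lemma subst_L: assumes "\<forall>a\<in>V. f a \<in> L" shows "x \<in> L \<Longrightarrow> subst_word f x \<in> L"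
proof (induction x)
  case Nil then show ?case by simp
next
  case (Cons l x)
  obtain a b where l: "l = (a,b)" by fastforce
  with Cons assms L_inv show ?case by (cases b) auto
qed

lemma induced_cls: assumes "good f" "x \<in> L"
  shows "induced V E f (cls x) = cls (subst_word f x)"
proof -
  define x' where "x' = (SOME z. z \<in> cls x)"
  have x': "x' \<in> L" "QQ E x x'" using some_cls[OF assms(2)] by (auto simp: x'_def)
  have fL: "\<forall>a\<in>V. f a \<in> L" and comm: "\<And>a c. E a c \<Longrightarrow> QQ E (f a @ f c) (f c @ f a)"
    using assms(1) by (auto simp: good_def)
  have "induced V E f (cls x) = cls (subst_word f x')"
    using cls_carrier[OF assms(2)] by (simp add: induced_def x'_def cls_def)
  also have "\<dots> = cls (subst_word f x)"
    using subst_QQ[OF Esym comm x'(2)] subst_L[OF fL] x' assms(2)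
    by (intro cls_eq) (auto intro: QQ_sym)
  finally show ?thesis .
qed

lemma induced_hom: assumes "good f" shows "induced V E f \<in> hom G G"
proof (rule homI)
  have fL: "\<forall>a\<in>V. f a \<in> L" using assms by (auto simp: good_def)
  fix x assume "x \<in> carrier G"
  then obtain a where a: "a \<in> L" "x = cls a" by (metis carrierE)
  show "induced V E f x \<in> carrier G"
    using a induced_cls[OF assms a(1)] cls_carrier[OF subst_L[OF fL a(1)]] by simp
next
  have fL: "\<forall>a\<in>V. f a \<in> L" using assms by (auto simp: good_def)
  fix x y assume "x \<in> carrier G" "y \<in> carrier G"
  then obtain a b where ab: "a \<in> L" "b \<in> L" "x = cls a" "y = cls b" by (metis carrierE)
  have ab2: "a @ b \<in> L" using ab by simp
  show "induced V E f (x \<otimes>\<^bsub>G\<^esub> y) = induced V E f x \<otimes>\<^bsub>G\<^esub> induced V E f y"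
    using ab mult_cls[OF ab(1,2)] induced_cls[OF assms ab2] induced_cls[OF assms ab(1)]
      induced_cls[OF assms ab(2)] mult_cls[OF subst_L[OF fL ab(1)] subst_L[OF fL ab(2)]]
    by simp
qed

lemma subst_id_QQ: assumes "\<forall>a\<in>V. QQ E (h a) [(a,True)]"
  shows "x \<in> L \<Longrightarrow> QQ E (subst_word h x) x"
proof (induction x)
  case Nil then show ?case by simp
next
  case (Cons l x)
  obtain a b where l: "l = (a,b)" by fastforce
  have a: "a \<in> V" using Cons l by auto
  have "QQ E (sl h l) [l]"
  proof (cases b)
    case True then show ?thesis using assms a l by simp
  next
    case False then show ?thesis using QQ_inv[where E=E and x="h a" and y="[(a,True)]", OF Esym] assms a l by simp
  qed
  then show ?case using Cons QQ_app[of E "sl h l" "[l]"] by simp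
qed

lemma induced_auto:
  assumes f: "good f" and g: "good g"
    and gf: "\<forall>a\<in>V. QQ E (subst_word g (f a)) [(a,True)]"
    and fg: "\<forall>a\<in>V. QQ E (subst_word f (g a)) [(a,True)]"
  shows "induced V E f \<in> auto G"
proof -
  have fL: "\<forall>a\<in>V. f a \<in> L" and gL: "\<forall>a\<in>V. g a \<in> L" using f g by (auto simp: good_def)
  have left: "\<forall>x\<in>carrier G. induced V E g (induced V E f x) = x"
  proof
    fix x assume "x \<in> carrier G"
    then obtain w where w: "w \<in> L" "x = cls w" by (auto simp: carrier_G)
    have "induced V E g (induced V E f x) = cls (subst_word g (subst_word f w))"
      using w by (simp add: induced_cls f g subst_L[OF fL])
    also have "\<dots> = cls w" unfolding subst_subst
      using subst_id_QQ[OF gf w(1)] w subst_L[OF fL] subst_L[OF gL]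
      by (intro cls_eq) (auto simp: subst_subst[symmetric])
    finally show "induced V E g (induced V E f x) = x" using w by simp
  qed
  have right: "\<forall>x\<in>carrier G. induced V E f (induced V E g x) = x"
  proof
    fix x assume "x \<in> carrier G"
    then obtain w where w: "w \<in> L" "x = cls w" by (auto simp: carrier_G)
    have "induced V E f (induced V E g x) = cls (subst_word f (subst_word g w))"
      using w by (simp add: induced_cls f g subst_L[OF gL])
    also have "\<dots> = cls w" unfolding subst_subst
      using subst_id_QQ[OF fg w(1)] w subst_L[OF fL] subst_L[OF gL]
      by (intro cls_eq) (auto simp: subst_subst[symmetric])
    finally show "induced V E f (induced V E g x) = x" using w by simp
  qed
  have hf: "induced V E f \<in> hom G G" and hg: "induced V E g \<in> hom G G"
    using induced_hom f g by auto
  have "bij_betw (induced V E f) (carrier G) (carrier G)"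
    by (rule bij_betw_byWitness[OF left right]) (use hf hg in \<open>auto simp: hom_def\<close>)
  moreover have "induced V E f \<in> extensional (carrier G)"
    by (simp add: induced_def)
  ultimately show ?thesis using hf by (simp add: auto_def Bij_def)
qed

end


lemma (in group) cancel_l [simp]: "x \<in> carrier G \<Longrightarrow> y \<in> carrier G \<Longrightarrow> x \<otimes> (inv x \<otimes> y) = y"
  by (simp add: m_assoc[symmetric])
lemma (in group) cancel_l2 [simp]: "x \<in> carrier G \<Longrightarrow> y \<in> carrier G \<Longrightarrow> inv x \<otimes> (x \<otimes> y) = y"
  by (simp add: m_assoc[symmetric])

lemma (in group) conj_pow:
  assumes "g \<in> carrier G" "h \<in> carrier G"
  shows "(inv g \<otimes> h \<otimes> g) [^] (m::nat) = inv g \<otimes> h [^] m \<otimes> g"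
proof (induction m)
  case 0 then show ?case using assms by (simp add: m_assoc)
next
  case (Suc m)
  then show ?case using assms by (simp add: m_assoc)
qed

context rg
begin

abbreviation "Aut \<equiv> AutoGroup G"

lemma carrier_Aut: "carrier Aut = auto G"
  by (simp add: AutoGroup_def BijGroup_def)

lemma group_Aut: "group Aut"
  using group.AutoGroup[OF group_G] .

lemma Aut_hom: "\<phi> \<in> carrier Aut \<Longrightarrow> \<phi> \<in> hom G G"
  by (simp add: carrier_Aut auto_def)

lemma Aut_group_hom: "\<phi> \<in> carrier Aut \<Longrightarrow> group_hom G G \<phi>"
  using Aut_hom group_G by (simp add: group_hom_def group_hom_axioms_def)

lemma Aut_closed: "\<phi> \<in> carrier Aut \<Longrightarrow> x \<in> carrier G \<Longrightarrow> \<phi> x \<in> carrier G"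
  using Aut_hom by (auto simp: hom_def)

lemma Aut_mult: "\<phi> \<in> carrier Aut \<Longrightarrow> \<psi> \<in> carrier Aut \<Longrightarrow> x \<in> carrier G \<Longrightarrow>
    (\<phi> \<otimes>\<^bsub>Aut\<^esub> \<psi>) x = \<phi> (\<psi> x)"
  by (simp add: carrier_Aut AutoGroup_def BijGroup_def auto_def compose_def)

lemma Aut_one: "x \<in> carrier G \<Longrightarrow> \<one>\<^bsub>Aut\<^esub> x = x"
  by (simp add: AutoGroup_def BijGroup_def)

lemma Aut_inv_apply: assumes "\<phi> \<in> carrier Aut" "x \<in> carrier G"
  shows "(inv\<^bsub>Aut\<^esub> \<phi>) (\<phi> x) = x"
proof -
  have "inv\<^bsub>Aut\<^esub> \<phi> \<otimes>\<^bsub>Aut\<^esub> \<phi> = \<one>\<^bsub>Aut\<^esub>" using group.l_inv[OF group_Aut assms(1)] .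
  then have "(inv\<^bsub>Aut\<^esub> \<phi> \<otimes>\<^bsub>Aut\<^esub> \<phi>) x = x" using Aut_one assms by simp
  then show ?thesis using Aut_mult[OF group.inv_closed[OF group_Aut assms(1)] assms(1,2)] by simp
qed

lemma gen_carrier: "a \<in> V \<Longrightarrow> gen a \<in> carrier G"
  by (simp add: gen_def cls_carrier)

lemma cls_pos: "a \<in> V \<Longrightarrow> x \<in> L \<Longrightarrow> cls ((a,True) # x) = gen a \<otimes>\<^bsub>G\<^esub> cls x"
  using mult_cls[of "[(a,True)]" x] by (simp add: gen_def)

lemma cls_neg: "a \<in> V \<Longrightarrow> x \<in> L \<Longrightarrow> cls ((a,False) # x) = inv\<^bsub>G\<^esub> gen a \<otimes>\<^bsub>G\<^esub> cls x"
  using mult_cls[of "[(a,False)]" x] inv_cls[of "[(a,True)]"] by (simp add: gen_def word_inv_def)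

lemma hom_agree:
  assumes "\<phi> \<in> hom G G" "\<psi> \<in> hom G G" "\<forall>a\<in>V. \<phi> (gen a) = \<psi> (gen a)"
  shows "x \<in> L \<Longrightarrow> \<phi> (cls x) = \<psi> (cls x)"
proof (induction x)
  have g1: "group_hom G G \<phi>" "group_hom G G \<psi>"
    using assms group_G by (simp_all add: group_hom_def group_hom_axioms_def)
  case Nil then show ?case using group_hom.hom_one[OF g1(1)] group_hom.hom_one[OF g1(2)] one_G by simp
next
  have g1: "group_hom G G \<phi>" "group_hom G G \<psi>"
    using assms group_G by (simp_all add: group_hom_def group_hom_axioms_def)
  case (Cons l x)
  obtain a b where l: "l = (a,b)" by fastforce
  have a: "a \<in> V" and x: "x \<in> L" using Cons l by auto
  have gc: "gen a \<in> carrier G" using gen_carrier[OF a] .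
  have xc: "cls x \<in> carrier G" using cls_carrier[OF x] .
  show ?case
  proof (cases b)
    case True
    then show ?thesis using l cls_pos[OF a x] Cons assms(3) a x gc xc
      hom_mult[OF assms(1) gc xc] hom_mult[OF assms(2) gc xc] by simp
  next
    case False
    have ic: "inv\<^bsub>G\<^esub> gen a \<in> carrier G" using group.inv_closed[OF group_G gc] .
    show ?thesis using False l cls_neg[OF a x] Cons assms(3) a x gc xc
      hom_mult[OF assms(1) ic xc] hom_mult[OF assms(2) ic xc]
      group_hom.hom_inv[OF g1(1) gc] group_hom.hom_inv[OF g1(2) gc] by simp
  qed
qed

lemma Aut_eq:
  assumes "\<phi> \<in> carrier Aut" "\<psi> \<in> carrier Aut" "\<forall>a\<in>V. \<phi> (gen a) = \<psi> (gen a)"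
  shows "\<phi> = \<psi>"
proof (rule extensionalityI)
  show "\<phi> \<in> extensional (carrier G)" "\<psi> \<in> extensional (carrier G)"
    using assms(1,2) by (auto simp: carrier_Aut auto_def Bij_def)
  fix x assume "x \<in> carrier G"
  then obtain w where "w \<in> L" "x = cls w" by (metis carrierE)
  then show "\<phi> x = \<psi> x" using hom_agree[OF Aut_hom[OF assms(1)] Aut_hom[OF assms(2)] assms(3)] by simp
qed

lemma induced_gen: "good f \<Longrightarrow> a \<in> V \<Longrightarrow> induced V E f (gen a) = cls (f a)"
  using induced_cls[of f "[(a,True)]"] by (simp add: gen_def)

lemma hom_matrix_val: assumes "\<phi> (gen u) = cls y" "y \<in> L"
  shows "hom_matrix V E \<phi> x u = exp_sum x y"
proof -
  have "hom_matrix V E \<phi> x u = exp_sum x (SOME z. z \<in> cls y)"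
    using assms(1) by (simp add: hom_matrix_def gen_def cls_def)
  also have "\<dots> = exp_sum x y" using some_cls[OF assms(2)] exp_sum_QQ by metis
  finally show ?thesis .
qed

lemma comm_letter: "(\<forall>(a,b)\<in>set u. E a c) \<Longrightarrow> QQ E (u @ [(c,d)]) ((c,d) # u)"
proof (induction u)
  case Nil then show ?case by simp
next
  case (Cons l u)
  obtain a b where l: "l = (a,b)" by fastforce
  have ih: "QQ E (u @ [(c,d)]) ((c,d) # u)" using Cons.IH Cons.prems by auto
  have 1: "QQ E ((a,b) # u @ [(c,d)]) ((a,b) # (c,d) # u)" using QQ_cong[OF ih, of "[(a,b)]" "[]"] by simp
  have st: "raag_step E ([] @ [(a,b),(c,d)] @ u) ([] @ [(c,d),(a,b)] @ u)"
    by (rule raag_step.commute) (use Cons l in auto)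
  have 2: "QQ E ((a,b) # (c,d) # u) ((c,d) # (a,b) # u)"
    using r_into_equivclp[where r="raag_step E", OF st] by simp
  show ?case using QQ_trans[OF 1 2] l by simp
qed

lemma good_single:
  assumes p: "p \<in> V" and u: "u \<in> L" and cond: "\<And>c. E p c \<Longrightarrow> \<forall>(a,b)\<in>set u. E a c"
  shows "good (\<lambda>x. if x = p then u else [(x,True)])" (is "good ?f")
  unfolding good_def
proof (intro conjI ballI allI impI)
  fix a assume "a \<in> V" then show "?f a \<in> L" using u by auto
next
  fix a c assume ac: "E a c"
  show "QQ E (?f a @ ?f c) (?f c @ ?f a)"
  proof (cases "a = p")
    case True
    then have "c \<noteq> p" using ac Eirr by auto
    then show ?thesis using True comm_letter[OF cond[of c], of True] ac by simp
  next
    case False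
    show ?thesis
    proof (cases "c = p")
      case True
      then show ?thesis using False comm_letter[OF cond[of a], of True] Esym[OF ac]
        by (simp add: QQ_sym)
    next
      case False2: False
      have "raag_step E ([] @ [(a,True),(c,True)] @ []) ([] @ [(c,True),(a,True)] @ [])"
        by (rule raag_step.commute[where E=E and a=a and c=c, OF ac])
      then show ?thesis using False False2 r_into_equivclp[where r="raag_step E"] by auto
    qed
  qed
qed

lemma QQ_mid: "QQ E (xs @ (a,b) # (a, \<not>b) # ys) (xs @ ys)"
  using r_into_equivclp[where r="raag_step E", OF raag_step.cancel[where E=E and xs=xs and a=a and b=b and ys=ys]] by simp

lemma cls_rep: "a \<in> V \<Longrightarrow> cls (replicate m (a,True)) = gen a [^]\<^bsub>G\<^esub> m"
proof (induction m)
  case 0 then show ?case by (simp add: one_G)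
next
  case (Suc m)
  have r: "replicate m (a,True) \<in> L" using Suc.prems by (induction m) auto
  then show ?case using Suc cls_pos[of a "replicate m (a,True)"] monoid.nat_pow_Suc2[OF group.is_monoid[OF group_G] gen_carrier[OF Suc.prems]]
    by simp
qed

lemma exp_sum_rep: "exp_sum c (replicate m (a,True)) = (if a = c then int m else 0)"
  by (induction m) (auto simp: exp_sum_Cons[of c "(a,True)"])

end


locale rg2 = rg V E for V :: "'v set" and E +
  fixes v w :: 'v
  assumes B1: "B1 V E" and vV: "v \<in> V" and wV: "w \<in> V" and vw: "v \<noteq> w" and nE: "\<not> E v w"
begin

lemma nE': "\<not> E w v" using nE Esym by blast

lemma vequiv_vw: "vequiv V E v w" using B1 vV wV nE by (simp add: B1_def)

lemma vle_vw: "vle V E v w" using vequiv_vw by (simp add: vequiv_def)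

lemma Ewc: "E v c \<Longrightarrow> E w c"
proof -
  assume "E v c"
  then have "c \<in> lk V E v" using EV by (auto simp: lk_def)
  then have "c \<in> st V E w" using vle_vw by (auto simp: vle_def)
  moreover have "c \<noteq> w" using \<open>E v c\<close> nE by auto
  ultimately show "E w c" by (auto simp: st_def lk_def)
qed

lemma Evc: "E w c \<Longrightarrow> E v c"
proof -
  assume "E w c"
  then have "c \<in> lk V E w" using EV by (auto simp: lk_def)
  then have "c \<in> st V E v" using vequiv_vw by (auto simp: vle_def vequiv_def)
  moreover have "c \<noteq> v" using \<open>E w c\<close> nE' by auto
  ultimately show "E v c" by (auto simp: st_def lk_def)
qed

definition "fc1 = (\<lambda>x. if x = v then [(w,False),(v,True),(w,True)] else [(x,True)])"
definition "fc1i = (\<lambda>x. if x = v then [(w,True),(v,True),(w,False)] else [(x,True)])"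
definition "ft = (\<lambda>x. if x = v then [(v,True),(w,True)] else [(x,True)])"
definition "fti = (\<lambda>x. if x = v then [(v,True),(w,False)] else [(x,True)])"
definition "fc = (\<lambda>x. if x = w then [(v,False),(w,True),(v,True)] else [(x,True)])"
definition "fci = (\<lambda>x. if x = w then [(v,True),(w,True),(v,False)] else [(x,True)])"

lemma good_fc1: "good fc1" unfolding fc1_def
  by (rule good_single) (use vV wV Ewc in auto)
lemma good_fc1i: "good fc1i" unfolding fc1i_def
  by (rule good_single) (use vV wV Ewc in auto)
lemma good_ft: "good ft" unfolding ft_def
  by (rule good_single) (use vV wV Ewc in auto)
lemma good_fti: "good fti" unfolding fti_def
  by (rule good_single) (use vV wV Ewc in auto)
lemma good_fc: "good fc" unfolding fc_def
  by (rule good_single) (use vV wV Evc in auto)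
lemma good_fci: "good fci" unfolding fci_def
  by (rule good_single) (use vV wV Evc in auto)

lemma c1_auto: "induced V E fc1 \<in> auto G"
proof (rule induced_auto[OF good_fc1 good_fc1i])
  have "QQ E [(w,False),(w,True),(v,True),(w,False),(w,True)] [(v,True)]"
    using QQ_trans[OF QQ_mid[of "[]" w False "[(v,True),(w,False),(w,True)]", simplified]
                      QQ_mid[of "[(v,True)]" w False "[]", simplified]] .
  then show "\<forall>a\<in>V. QQ E (subst_word fc1i (fc1 a)) [(a, True)]"
    using vw by (auto simp: fc1_def fc1i_def word_inv_def)
  have "QQ E [(w,True),(w,False),(v,True),(w,True),(w,False)] [(v,True)]"
    using QQ_trans[OF QQ_mid[of "[]" w True "[(v,True),(w,True),(w,False)]", simplified]
                      QQ_mid[of "[(v,True)]" w True "[]", simplified]] .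
  then show "\<forall>a\<in>V. QQ E (subst_word fc1 (fc1i a)) [(a, True)]"
    using vw by (auto simp: fc1_def fc1i_def word_inv_def)
qed

lemma t0_auto: "induced V E ft \<in> auto G"
proof (rule induced_auto[OF good_ft good_fti])
  have "QQ E [(v,True),(w,False),(w,True)] [(v,True)]"
    using QQ_mid[of "[(v,True)]" w False "[]", simplified] .
  then show "\<forall>a\<in>V. QQ E (subst_word fti (ft a)) [(a, True)]"
    using vw by (auto simp: ft_def fti_def word_inv_def)
  have "QQ E [(v,True),(w,True),(w,False)] [(v,True)]"
    using QQ_mid[of "[(v,True)]" w True "[]", simplified] .
  then show "\<forall>a\<in>V. QQ E (subst_word ft (fti a)) [(a, True)]"
    using vw by (auto simp: ft_def fti_def word_inv_def)
qed

lemma c_auto: "induced V E fc \<in> auto G"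
proof (rule induced_auto[OF good_fc good_fci])
  have "QQ E [(v,False),(v,True),(w,True),(v,False),(v,True)] [(w,True)]"
    using QQ_trans[OF QQ_mid[of "[]" v False "[(w,True),(v,False),(v,True)]", simplified]
                      QQ_mid[of "[(w,True)]" v False "[]", simplified]] .
  then show "\<forall>a\<in>V. QQ E (subst_word fci (fc a)) [(a, True)]"
    using vw by (auto simp: fc_def fci_def word_inv_def)
  have "QQ E [(v,True),(v,False),(w,True),(v,True),(v,False)] [(w,True)]"
    using QQ_trans[OF QQ_mid[of "[]" v True "[(w,True),(v,True),(v,False)]", simplified]
                      QQ_mid[of "[(w,True)]" v True "[]", simplified]] .
  then show "\<forall>a\<in>V. QQ E (subst_word fc (fci a)) [(a, True)]"
    using vw by (auto simp: fc_def fci_def word_inv_def)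
qed

lemma cwv_eq: "cwv V E w v = induced V E fc1"
  unfolding cwv_def partial_conj_def fc1_def by (rule arg_cong[where f="induced V E"]) auto

lemma t0_eq: "transvection V E v w = induced V E ft"
  unfolding transvection_def ft_def by simp

lemma c_eq: "partial_conj V E v {w} = induced V E fc"
  unfolding partial_conj_def fc_def by (rule arg_cong[where f="induced V E"]) auto

end


context rg2
begin

abbreviation "Vg \<equiv> gen v"
abbreviation "Wg \<equiv> gen w"

lemma Vc: "Vg \<in> carrier G" using gen_carrier vV .
lemma Wc: "Wg \<in> carrier G" using gen_carrier wV .

lemma c1_gen: "a \<in> V \<Longrightarrow> induced V E fc1 (gen a) =
   (if a = v then inv\<^bsub>G\<^esub> Wg \<otimes>\<^bsub>G\<^esub> (Vg \<otimes>\<^bsub>G\<^esub> Wg) else gen a)"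
  using induced_gen[OF good_fc1] cls_neg[of w "[(v,True),(w,True)]"] cls_pos[of v "[(w,True)]"] vV wV
  by (simp add: fc1_def gen_def)

lemma t0_gen: "a \<in> V \<Longrightarrow> induced V E ft (gen a) =
   (if a = v then Vg \<otimes>\<^bsub>G\<^esub> Wg else gen a)"
  using induced_gen[OF good_ft] cls_pos[of v "[(w,True)]"] vV wV
  by (simp add: ft_def gen_def)

lemma c_gen: "a \<in> V \<Longrightarrow> induced V E fc (gen a) =
   (if a = w then inv\<^bsub>G\<^esub> Vg \<otimes>\<^bsub>G\<^esub> (Wg \<otimes>\<^bsub>G\<^esub> Vg) else gen a)"
  using induced_gen[OF good_fc] cls_neg[of v "[(w,True),(v,True)]"] cls_pos[of w "[(v,True)]"] vV wV
  by (simp add: fc_def gen_def)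

lemma c1_pow:
  fixes m :: nat
  shows "(induced V E fc1 [^]\<^bsub>Aut\<^esub> m) Vg = inv\<^bsub>G\<^esub> (Wg [^]\<^bsub>G\<^esub> m) \<otimes>\<^bsub>G\<^esub> (Vg \<otimes>\<^bsub>G\<^esub> Wg [^]\<^bsub>G\<^esub> m)
   \<and> (\<forall>a\<in>V. a \<noteq> v \<longrightarrow> (induced V E fc1 [^]\<^bsub>Aut\<^esub> m) (gen a) = gen a)"
proof (induction m)
  case 0
  interpret G: group G by (rule group_G)
  show ?case using Aut_one gen_carrier Vc by simp
next
  case (Suc m)
  interpret G: group G by (rule group_G)
  interpret A: group Aut by (rule group_Aut)
  let ?c = "induced V E fc1"
  let ?P = "?c [^]\<^bsub>Aut\<^esub> m"
  have cA: "?c \<in> carrier Aut" using c1_auto carrier_Aut by simp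
  have PA: "?P \<in> carrier Aut" using cA by simp
  interpret h: group_hom G G ?P using Aut_group_hom[OF PA] .
  have eq: "?c [^]\<^bsub>Aut\<^esub> Suc m = ?P \<otimes>\<^bsub>Aut\<^esub> ?c" by simp
  have Pw: "?P Wg = Wg" using Suc.IH wV vw by auto
  have X: "Wg [^]\<^bsub>G\<^esub> m \<in> carrier G" using Wc by simp
  have 1: "(?c [^]\<^bsub>Aut\<^esub> Suc m) Vg = ?P (inv\<^bsub>G\<^esub> Wg \<otimes>\<^bsub>G\<^esub> (Vg \<otimes>\<^bsub>G\<^esub> Wg))"
    unfolding eq using Aut_mult[OF PA cA Vc] c1_gen[OF vV] by simp
  also have "\<dots> = inv\<^bsub>G\<^esub> Wg \<otimes>\<^bsub>G\<^esub> ((inv\<^bsub>G\<^esub> (Wg [^]\<^bsub>G\<^esub> m) \<otimes>\<^bsub>G\<^esub> (Vg \<otimes>\<^bsub>G\<^esub> Wg [^]\<^bsub>G\<^esub> m)) \<otimes>\<^bsub>G\<^esub> Wg)"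
    using Vc Wc Pw Suc.IH by (simp add: h.hom_mult h.hom_inv)
  also have "\<dots> = inv\<^bsub>G\<^esub> (Wg [^]\<^bsub>G\<^esub> Suc m) \<otimes>\<^bsub>G\<^esub> (Vg \<otimes>\<^bsub>G\<^esub> Wg [^]\<^bsub>G\<^esub> Suc m)"
    using Vc Wc X by (simp add: G.m_assoc G.inv_mult_group)
  finally have A: "(?c [^]\<^bsub>Aut\<^esub> Suc m) Vg = inv\<^bsub>G\<^esub> (Wg [^]\<^bsub>G\<^esub> Suc m) \<otimes>\<^bsub>G\<^esub> (Vg \<otimes>\<^bsub>G\<^esub> Wg [^]\<^bsub>G\<^esub> Suc m)" .
  have B: "\<forall>a\<in>V. a \<noteq> v \<longrightarrow> (?c [^]\<^bsub>Aut\<^esub> Suc m) (gen a) = gen a"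
  proof (intro ballI impI)
    fix a assume a: "a \<in> V" "a \<noteq> v"
    show "(?c [^]\<^bsub>Aut\<^esub> Suc m) (gen a) = gen a"
      unfolding eq using Aut_mult[OF PA cA gen_carrier[OF a(1)]] c1_gen[OF a(1)] a Suc.IH by simp
  qed
  show ?case using A B by blast
qed

end


context rg2
begin

lemma t0_pow:
  fixes m :: nat
  shows "(induced V E ft [^]\<^bsub>Aut\<^esub> m) Vg = Vg \<otimes>\<^bsub>G\<^esub> Wg [^]\<^bsub>G\<^esub> m
   \<and> (\<forall>a\<in>V. a \<noteq> v \<longrightarrow> (induced V E ft [^]\<^bsub>Aut\<^esub> m) (gen a) = gen a)"
proof (induction m)
  case 0
  interpret G: group G by (rule group_G)
  show ?case using Aut_one gen_carrier Vc by simp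
next
  case (Suc m)
  interpret G: group G by (rule group_G)
  interpret A: group Aut by (rule group_Aut)
  let ?c = "induced V E ft"
  let ?P = "?c [^]\<^bsub>Aut\<^esub> m"
  have cA: "?c \<in> carrier Aut" using t0_auto carrier_Aut by simp
  have PA: "?P \<in> carrier Aut" using cA by simp
  interpret h: group_hom G G ?P using Aut_group_hom[OF PA] .
  have eq: "?c [^]\<^bsub>Aut\<^esub> Suc m = ?P \<otimes>\<^bsub>Aut\<^esub> ?c" by simp
  have Pw: "?P Wg = Wg" using Suc.IH wV vw by auto
  have Xw: "Wg [^]\<^bsub>G\<^esub> m \<in> carrier G" using Wc by simp
  have 1: "(?c [^]\<^bsub>Aut\<^esub> Suc m) Vg = ?P (Vg \<otimes>\<^bsub>G\<^esub> Wg)"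
    unfolding eq using Aut_mult[OF PA cA Vc] t0_gen[OF vV] by simp
  also have "\<dots> = (Vg \<otimes>\<^bsub>G\<^esub> Wg [^]\<^bsub>G\<^esub> m) \<otimes>\<^bsub>G\<^esub> Wg"
    using Vc Wc Pw Suc.IH by (simp add: h.hom_mult)
  also have "\<dots> = Vg \<otimes>\<^bsub>G\<^esub> Wg [^]\<^bsub>G\<^esub> Suc m"
    using Vc Wc Xw by (simp add: G.m_assoc)
  finally have A: "(?c [^]\<^bsub>Aut\<^esub> Suc m) Vg = Vg \<otimes>\<^bsub>G\<^esub> Wg [^]\<^bsub>G\<^esub> Suc m" .
  have B: "\<forall>a\<in>V. a \<noteq> v \<longrightarrow> (?c [^]\<^bsub>Aut\<^esub> Suc m) (gen a) = gen a"
  proof (intro ballI impI)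
    fix a assume a: "a \<in> V" "a \<noteq> v"
    show "(?c [^]\<^bsub>Aut\<^esub> Suc m) (gen a) = gen a"
      unfolding eq using Aut_mult[OF PA cA gen_carrier[OF a(1)]] t0_gen[OF a(1)] a Suc.IH by simp
  qed
  show ?case using A B by blast
qed

lemma main_eq:
  fixes m :: nat
  shows "induced V E fc1 [^]\<^bsub>Aut\<^esub> m = (induced V E ft [^]\<^bsub>Aut\<^esub> m) \<otimes>\<^bsub>Aut\<^esub> induced V E fc
     \<otimes>\<^bsub>Aut\<^esub> inv\<^bsub>Aut\<^esub> (induced V E ft [^]\<^bsub>Aut\<^esub> m) \<otimes>\<^bsub>Aut\<^esub> inv\<^bsub>Aut\<^esub> (induced V E fc)"
proof -
  obtain T where T_def: "T = induced V E ft [^]\<^bsub>Aut\<^esub> m" by blast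
  obtain c where c_def: "c = induced V E fc" by blast
  obtain Xw where X_def: "Xw = pow G Wg m" by blast
  obtain iT where iT_def: "iT = inv\<^bsub>Aut\<^esub> T" by blast
  obtain ic where ic_def: "ic = inv\<^bsub>Aut\<^esub> c" by blast
  interpret G: group G by (rule group_G)
  interpret A: group Aut by (rule group_Aut)
  have c1A: "induced V E fc1 \<in> carrier Aut" using c1_auto carrier_Aut by simp
  have t0A: "induced V E ft \<in> carrier Aut" using t0_auto carrier_Aut by simp
  have cA: "c \<in> carrier Aut" using c_auto carrier_Aut c_def by simp
  have TA: "T \<in> carrier Aut" using t0A T_def by simp
  have iTA: "iT \<in> carrier Aut" using TA iT_def by simp
  have icA: "ic \<in> carrier Aut" using cA ic_def by simp
  interpret hT: group_hom G G T using Aut_group_hom[OF TA] .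
  interpret hiT: group_hom G G iT using Aut_group_hom[OF iTA] .
  interpret hc: group_hom G G c using Aut_group_hom[OF cA] .
  interpret hic: group_hom G G ic using Aut_group_hom[OF icA] .
  have Xwc: "Xw \<in> carrier G" using Wc X_def by simp
  have TV: "T Vg = Vg \<otimes>\<^bsub>G\<^esub> Xw" using t0_pow T_def X_def by blast
  have Ta: "\<And>a. a \<in> V \<Longrightarrow> a \<noteq> v \<Longrightarrow> T (gen a) = gen a" using t0_pow T_def by blast
  have TW: "T Wg = Wg" using Ta[OF wV] vw by simp
  have TX: "T Xw = Xw" using hT.hom_nat_pow[OF Wc] TW X_def by simp
  have cV: "c Vg = Vg" using c_gen[OF vV] vw c_def by simp
  have cW: "c Wg = inv\<^bsub>G\<^esub> Vg \<otimes>\<^bsub>G\<^esub> (Wg \<otimes>\<^bsub>G\<^esub> Vg)" using c_gen[OF wV] c_def by simp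
  have ca: "\<And>a. a \<in> V \<Longrightarrow> a \<noteq> w \<Longrightarrow> c (gen a) = gen a" using c_gen c_def by simp
  have cX: "c Xw = inv\<^bsub>G\<^esub> Vg \<otimes>\<^bsub>G\<^esub> (Xw \<otimes>\<^bsub>G\<^esub> Vg)"
    using hc.hom_nat_pow[OF Wc] cW G.conj_pow[OF Vc Wc, of m] Vc Wc Xwc X_def by (simp add: G.m_assoc)
  have "T (Vg \<otimes>\<^bsub>G\<^esub> inv\<^bsub>G\<^esub> Xw) = Vg" using TV TX Vc Xwc by (simp add: G.m_assoc)
  then have iTV: "iT Vg = Vg \<otimes>\<^bsub>G\<^esub> inv\<^bsub>G\<^esub> Xw"
    using Aut_inv_apply[OF TA, of "Vg \<otimes>\<^bsub>G\<^esub> inv\<^bsub>G\<^esub> Xw"] Vc Xwc iT_def by simp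
  have iTa: "\<And>a. a \<in> V \<Longrightarrow> a \<noteq> v \<Longrightarrow> iT (gen a) = gen a"
    using Aut_inv_apply[OF TA gen_carrier] Ta iT_def by metis
  have cc: "c (Vg \<otimes>\<^bsub>G\<^esub> (Wg \<otimes>\<^bsub>G\<^esub> inv\<^bsub>G\<^esub> Vg)) = Wg"
    using cV cW Vc Wc by (simp add: G.m_assoc)
  then have icW: "ic Wg = Vg \<otimes>\<^bsub>G\<^esub> (Wg \<otimes>\<^bsub>G\<^esub> inv\<^bsub>G\<^esub> Vg)"
    using Aut_inv_apply[OF cA, of "Vg \<otimes>\<^bsub>G\<^esub> (Wg \<otimes>\<^bsub>G\<^esub> inv\<^bsub>G\<^esub> Vg)"] Vc Wc ic_def by simp
  have ica: "\<And>a. a \<in> V \<Longrightarrow> a \<noteq> w \<Longrightarrow> ic (gen a) = gen a"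
    using Aut_inv_apply[OF cA gen_carrier] ca ic_def by metis
  have app: "\<And>x. x \<in> carrier G \<Longrightarrow> (T \<otimes>\<^bsub>Aut\<^esub> c \<otimes>\<^bsub>Aut\<^esub> iT \<otimes>\<^bsub>Aut\<^esub> ic) x = T (c (iT (ic x)))"
  proof -
    fix x assume x: "x \<in> carrier G"
    have 1: "ic x \<in> carrier G" using Aut_closed[OF icA x] .
    have 2: "iT (ic x) \<in> carrier G" using Aut_closed[OF iTA 1] .
    show "(T \<otimes>\<^bsub>Aut\<^esub> c \<otimes>\<^bsub>Aut\<^esub> iT \<otimes>\<^bsub>Aut\<^esub> ic) x = T (c (iT (ic x)))"
      using Aut_mult[OF A.m_closed[OF A.m_closed[OF TA cA] iTA] icA x]
        Aut_mult[OF A.m_closed[OF TA cA] iTA 1] Aut_mult[OF TA cA 2] by simp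
  qed
  have c1p: "(induced V E fc1 [^]\<^bsub>Aut\<^esub> m) Vg = inv\<^bsub>G\<^esub> Xw \<otimes>\<^bsub>G\<^esub> (Vg \<otimes>\<^bsub>G\<^esub> Xw)"
    "\<And>a. a \<in> V \<Longrightarrow> a \<noteq> v \<Longrightarrow> (induced V E fc1 [^]\<^bsub>Aut\<^esub> m) (gen a) = gen a"
    using c1_pow X_def by blast+
  have comm: "Wg \<otimes>\<^bsub>G\<^esub> Xw = Xw \<otimes>\<^bsub>G\<^esub> Wg"
    using G.nat_pow_Suc2[OF Wc, of m] G.nat_pow_Suc[of Wg m] X_def by simp
  show ?thesis unfolding T_def[symmetric] c_def[symmetric] iT_def[symmetric] ic_def[symmetric]
  proof (rule Aut_eq)
    show "induced V E fc1 [^]\<^bsub>Aut\<^esub> m \<in> carrier Aut" using c1A by simp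
    show "T \<otimes>\<^bsub>Aut\<^esub> c \<otimes>\<^bsub>Aut\<^esub> iT \<otimes>\<^bsub>Aut\<^esub> ic \<in> carrier Aut" using TA cA iTA icA by simp
    show "\<forall>a\<in>V. (induced V E fc1 [^]\<^bsub>Aut\<^esub> m) (gen a) = (T \<otimes>\<^bsub>Aut\<^esub> c \<otimes>\<^bsub>Aut\<^esub> iT \<otimes>\<^bsub>Aut\<^esub> ic) (gen a)"
    proof
      fix a assume a: "a \<in> V"
      show "(induced V E fc1 [^]\<^bsub>Aut\<^esub> m) (gen a) = (T \<otimes>\<^bsub>Aut\<^esub> c \<otimes>\<^bsub>Aut\<^esub> iT \<otimes>\<^bsub>Aut\<^esub> ic) (gen a)"
      proof (cases "a = v")
        case True
        have "ic Vg = Vg" using ica[OF vV] vw by simp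
        moreover have "c (Vg \<otimes>\<^bsub>G\<^esub> inv\<^bsub>G\<^esub> Xw) = inv\<^bsub>G\<^esub> Xw \<otimes>\<^bsub>G\<^esub> Vg"
          using cV cX Vc Xwc by (simp add: G.m_assoc G.inv_mult_group)
        moreover have "T (inv\<^bsub>G\<^esub> Xw \<otimes>\<^bsub>G\<^esub> Vg) = inv\<^bsub>G\<^esub> Xw \<otimes>\<^bsub>G\<^esub> (Vg \<otimes>\<^bsub>G\<^esub> Xw)"
          using TV TX Vc Xwc by simp
        ultimately show ?thesis using True app[OF Vc] iTV c1p(1) by simp
      next
        case False
        show ?thesis
        proof (cases "a = w")
          case True
          have "iT (ic Wg) = (Vg \<otimes>\<^bsub>G\<^esub> inv\<^bsub>G\<^esub> Xw) \<otimes>\<^bsub>G\<^esub> (Wg \<otimes>\<^bsub>G\<^esub> inv\<^bsub>G\<^esub> (Vg \<otimes>\<^bsub>G\<^esub> inv\<^bsub>G\<^esub> Xw))"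
            using icW iTV iTa[OF wV] vw Vc Wc Xwc by simp
          also have "\<dots> = Vg \<otimes>\<^bsub>G\<^esub> (inv\<^bsub>G\<^esub> Xw \<otimes>\<^bsub>G\<^esub> ((Wg \<otimes>\<^bsub>G\<^esub> Xw) \<otimes>\<^bsub>G\<^esub> inv\<^bsub>G\<^esub> Vg))"
            using Vc Wc Xwc by (simp add: G.m_assoc G.inv_mult_group)
          also have "\<dots> = Vg \<otimes>\<^bsub>G\<^esub> (Wg \<otimes>\<^bsub>G\<^esub> inv\<^bsub>G\<^esub> Vg)"
            unfolding comm using Vc Wc Xwc by (simp add: G.m_assoc)
          finally have "iT (ic Wg) = Vg \<otimes>\<^bsub>G\<^esub> (Wg \<otimes>\<^bsub>G\<^esub> inv\<^bsub>G\<^esub> Vg)" .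
          then show ?thesis using True app[OF Wc] cc TW c1p(2)[OF wV] vw by simp
        next
          case False2: False
          show ?thesis using app[OF gen_carrier[OF a]] ica[OF a False2] iTa[OF a False]
              ca[OF a False2] Ta[OF a False] c1p(2)[OF a False] by simp
        qed
      qed
    qed
  qed
qed

end


context rg2
begin

lemma t0_gens: "induced V E ft \<in> SAut0 V E"
  unfolding SAut0_def
proof (rule generate.incl)
  have "transvection V E v w \<in> {transvection V E v w |v w. v \<in> V \<and> w \<in> V \<and> v \<noteq> w \<and> vle V E v w}"
    using vV wV vw vle_vw by blast
  then show "induced V E ft \<in> {transvection V E v w |v w. v \<in> V \<and> w \<in> V \<and> v \<noteq> w \<and> vle V E v w} \<union>
       {partial_conj V E v Y |v Y. v \<in> V \<and> Y \<in> components (V - st V E v) E}"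
    using t0_eq by simp
qed

lemma comp_w: "{w} \<in> components (V - st V E v) E"
proof -
  let ?S = "V - st V E v"
  let ?R = "\<lambda>a b. a \<in> ?S \<and> b \<in> ?S \<and> E a b"
  have wS: "w \<in> ?S" using wV vw nE by (auto simp: st_def lk_def)
  have noR: "\<not> ?R w b" for b
  proof
    assume "?R w b"
    then have "E v b" "b \<in> ?S" using Evc by auto
    then show False using EV by (auto simp: st_def lk_def)
  qed
  have "{y \<in> ?S. ?R\<^sup>*\<^sup>* w y} = {w}"
  proof
    show "{y \<in> ?S. ?R\<^sup>*\<^sup>* w y} \<subseteq> {w}"
    proof
      fix y assume "y \<in> {y \<in> ?S. ?R\<^sup>*\<^sup>* w y}"
      then have "?R\<^sup>*\<^sup>* w y" by simp
      then show "y \<in> {w}" by (cases rule: converse_rtranclpE) (use noR in auto)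
    qed
    show "{w} \<subseteq> {y \<in> ?S. ?R\<^sup>*\<^sup>* w y}" using wS by auto
  qed
  then show ?thesis unfolding components_def using wS by blast
qed

lemma c_gens: "induced V E fc \<in> SAut0 V E"
  unfolding SAut0_def
proof (rule generate.incl)
  have "partial_conj V E v {w} \<in> {partial_conj V E v Y |v Y. v \<in> V \<and> Y \<in> components (V - st V E v) E}"
    using vV comp_w by blast
  then show "induced V E fc \<in> {transvection V E v w |v w. v \<in> V \<and> w \<in> V \<and> v \<noteq> w \<and> vle V E v w} \<union>
       {partial_conj V E v Y |v Y. v \<in> V \<and> Y \<in> components (V - st V E v) E}"
    using c_eq by simp
qed

lemma T_gens: "induced V E ft [^]\<^bsub>Aut\<^esub> (m::nat) \<in> SAut0 V E"
proof (induction m)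
  case 0 then show ?case unfolding SAut0_def by (simp add: generate.one)
next
  case (Suc m) then show ?case unfolding SAut0_def
    using generate.eng[OF Suc[unfolded SAut0_def] t0_gens[unfolded SAut0_def]] by simp
qed

lemma T_SIA: "induced V E ft [^]\<^bsub>Aut\<^esub> m \<in> SIA V E m"
  unfolding SIA_def
proof (intro CollectI conjI ballI T_gens)
  fix x u assume x: "x \<in> V" and u: "u \<in> V"
  let ?T = "induced V E ft [^]\<^bsub>Aut\<^esub> m"
  have rL: "replicate m (w,True) \<in> L" using wV by (induction m) auto
  show "hom_matrix V E ?T x u mod int m = (if x = u then 1 else 0) mod int m"
  proof (cases "u = v")
    case True
    have "?T (gen u) = cls ((v,True) # replicate m (w,True))"
      using t0_pow True cls_pos[OF vV rL] cls_rep[OF wV] by simp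
    then have "hom_matrix V E ?T x u = exp_sum x ((v,True) # replicate m (w,True))"
      using hom_matrix_val rL vV by simp
    also have "\<dots> = (if v = x then 1 else 0) + (if w = x then int m else 0)"
      by (simp add: exp_sum_Cons[of x "(v,True)"] exp_sum_rep del: replicate.simps)
    finally show ?thesis using True vw by auto
  next
    case False
    have "?T (gen u) = cls [(u,True)]" using t0_pow False u by (simp add: gen_def)
    then have "hom_matrix V E ?T x u = exp_sum x [(u,True)]"
      using hom_matrix_val u by simp
    then show ?thesis by auto
  qed
qed

lemma c_SIA: "induced V E fc \<in> SIA V E m"
  unfolding SIA_def
proof (intro CollectI conjI ballI c_gens)
  fix x u assume x: "x \<in> V" and u: "u \<in> V"
  have "induced V E fc (gen u) = cls (fc u)" using induced_gen[OF good_fc u] .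
  moreover have "fc u \<in> L" using good_fc u by (auto simp: good_def)
  ultimately have "hom_matrix V E (induced V E fc) x u = exp_sum x (fc u)"
    using hom_matrix_val by simp
  also have "\<dots> = (if x = u then 1 else 0)"
    using vw by (auto simp: fc_def exp_sum_def)
  finally show "hom_matrix V E (induced V E fc) x u mod int m = (if x = u then 1 else 0) mod int m"
    by simp
qed

end

theorem lemma3p6:
  fixes V :: "'v set" and E :: "'v \<Rightarrow> 'v \<Rightarrow> bool" and v w :: 'v
  assumes "simplicial_graph V E" and "B1 V E"
    and "v \<in> V" and "w \<in> V" and "v \<noteq> w" and "\<not> E v w"
  defines "Aut \<equiv> AutoGroup (raag V E)"
  defines "c1 \<equiv> cwv V E w v"
  shows "(\<exists>t \<in> carrier Aut. \<exists>c2 \<in> carrier Aut. \<forall>m::nat.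
            c1 [^]\<^bsub>Aut\<^esub> m =
              inv\<^bsub>Aut\<^esub> (t [^]\<^bsub>Aut\<^esub> m) \<otimes>\<^bsub>Aut\<^esub> inv\<^bsub>Aut\<^esub> (inv\<^bsub>Aut\<^esub> c2)
                \<otimes>\<^bsub>Aut\<^esub> (t [^]\<^bsub>Aut\<^esub> m) \<otimes>\<^bsub>Aut\<^esub> inv\<^bsub>Aut\<^esub> c2)
       \<and> (\<forall>m::nat. c1 [^]\<^bsub>Aut\<^esub> m \<in> SIA' V E m)"
proof -
  interpret rg2 V E v w
    by unfold_locales (use assms in auto)
  interpret A: group "AutoGroup (raag V E)" by (rule group_Aut)
  have t0A: "induced V E ft \<in> carrier (AutoGroup (raag V E))" using t0_auto carrier_Aut by simp
  have cA: "induced V E fc \<in> carrier (AutoGroup (raag V E))" using c_auto carrier_Aut by simp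
  have part1: "\<forall>m::nat.
            cwv V E w v [^]\<^bsub>AutoGroup (raag V E)\<^esub> m =
              inv\<^bsub>AutoGroup (raag V E)\<^esub> ((inv\<^bsub>AutoGroup (raag V E)\<^esub> induced V E ft) [^]\<^bsub>AutoGroup (raag V E)\<^esub> m)
                \<otimes>\<^bsub>AutoGroup (raag V E)\<^esub> inv\<^bsub>AutoGroup (raag V E)\<^esub> (inv\<^bsub>AutoGroup (raag V E)\<^esub> induced V E fc)
                \<otimes>\<^bsub>AutoGroup (raag V E)\<^esub> ((inv\<^bsub>AutoGroup (raag V E)\<^esub> induced V E ft) [^]\<^bsub>AutoGroup (raag V E)\<^esub> m)
                \<otimes>\<^bsub>AutoGroup (raag V E)\<^esub> inv\<^bsub>AutoGroup (raag V E)\<^esub> induced V E fc"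
  proof
    fix m :: nat
    show "cwv V E w v [^]\<^bsub>AutoGroup (raag V E)\<^esub> m =
              inv\<^bsub>AutoGroup (raag V E)\<^esub> ((inv\<^bsub>AutoGroup (raag V E)\<^esub> induced V E ft) [^]\<^bsub>AutoGroup (raag V E)\<^esub> m)
                \<otimes>\<^bsub>AutoGroup (raag V E)\<^esub> inv\<^bsub>AutoGroup (raag V E)\<^esub> (inv\<^bsub>AutoGroup (raag V E)\<^esub> induced V E fc)
                \<otimes>\<^bsub>AutoGroup (raag V E)\<^esub> ((inv\<^bsub>AutoGroup (raag V E)\<^esub> induced V E ft) [^]\<^bsub>AutoGroup (raag V E)\<^esub> m)
                \<otimes>\<^bsub>AutoGroup (raag V E)\<^esub> inv\<^bsub>AutoGroup (raag V E)\<^esub> induced V E fc"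
      using main_eq[of m] A.nat_pow_inv[OF t0A, of m] t0A cA cwv_eq by simp
  qed
  have part2: "\<forall>m::nat. cwv V E w v [^]\<^bsub>AutoGroup (raag V E)\<^esub> m \<in> SIA' V E m"
  proof
    fix m :: nat
    have "(induced V E ft [^]\<^bsub>AutoGroup (raag V E)\<^esub> m) \<otimes>\<^bsub>AutoGroup (raag V E)\<^esub> induced V E fc
     \<otimes>\<^bsub>AutoGroup (raag V E)\<^esub> inv\<^bsub>AutoGroup (raag V E)\<^esub> (induced V E ft [^]\<^bsub>AutoGroup (raag V E)\<^esub> m)
     \<otimes>\<^bsub>AutoGroup (raag V E)\<^esub> inv\<^bsub>AutoGroup (raag V E)\<^esub> (induced V E fc) \<in>
        derived_set (AutoGroup (raag V E)) (SIA V E m)"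
      by (rule UN_I[OF T_SIA[of m]], rule UN_I[OF c_SIA[of m]]) simp
    then have "cwv V E w v [^]\<^bsub>AutoGroup (raag V E)\<^esub> m \<in>
        derived_set (AutoGroup (raag V E)) (SIA V E m)"
      unfolding main_eq[of m, symmetric] cwv_eq .
    then show "cwv V E w v [^]\<^bsub>AutoGroup (raag V E)\<^esub> m \<in> SIA' V E m"
      unfolding SIA'_def derived_def by (rule generate.incl)
  qed
  show ?thesis unfolding Aut_def c1_def
    using part1 part2 A.inv_closed[OF t0A] cA by blast
qed

end
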